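(* Assume (A) and (D), and fix $t>0$. Let $G_t(r)=f^2(r)\exp(\widetilde Ktg(r))$, $w_t(r)=g^2(r)\exp(Ktg(r))$, $\widetilde w_t(r)=g^2(r)\exp(\widetilde Ktg(r))$. Let $\kappa,\widetilde\kappa>0$ and define $\alpha_t(u)=(f^2)^{-1}(\kappa/u)$ and $\beta_t(u)=G_t^{-1}(\widetilde\kappa/u)$ for $u$ large enough, where $G_t^{-1}$ is the inverse of $G_t$ restricted to a half-line on which $G_t$ is continuous and strictly decreasing (such a half-line exists). (a) For every $\varepsilon\in(0,1)$ there exists $r_\varepsilon>0$ with $f^2(r)\le G_t(r)\le f^{2-\varepsilon}(r)$ for $r>r_\varepsilon$; and for every $\delta>0$, $$\lim_{u\to\infty}\frac{w_t(\alpha_t(u))}{u^\delta}=\lim_{u\to\infty}\frac{\widetilde w_t(\beta_t(u))}{u^\delta}=0.$$ (b) If moreover $m=g$ satisfies, for some $\omega\ge0$, the condition: for every $c>0$ and $\lambda\ge1$, $\limsup_{s\to0^+}\frac{g(f^{-1}(cs^\lambda))}{g(f^{-1}(s))}\le\lambda^\omega$, then $$\lim_{u\to\infty}\frac{g(\beta_t(u))}{g(\alpha_t(u))}=1.$$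
   Context: Setting. Fix $d\ge1$. Let $A$ be a positive semidefinite $d\times d$ matrix and $\nu$ a symmetric Lévy measure on $\mathbb R^d\setminus\{0\}$ (positive Radon measure with $\int(1\wedge|z|^2)\,\nu(dz)<\infty$, $\nu(-B)=\nu(B)$) with $\nu(\mathbb R^d\setminus\{0\})=\infty$, absolutely continuous with density also denoted $\nu(x)$. The Lévy operator $L$ on $L^2(dx)$ is the Fourier multiplier $\widehat{Lh}(\xi)=-\Psi(\xi)\widehat h(\xi)$ with $\Psi(\xi)=\tfrac12A\xi\cdot\xi+\int(1-\cos(\xi\cdot z))\,\nu(dz)$; $\{P_t\}_{t\ge0}$ is the associated convolution semigroup, $P_th(x)=\int p_t(y-x)h(y)\,dy$ with densities $p_t$. Let $V$ be locally bounded on $\mathbb R^d$ with $V(x)\to\infty$ as $|x|\to\infty$, and let $H=-L+V$ (self-adjoint, bounded below, defined via quadratic forms on $L^2(dx)$). For $t>0$, $e^{-tH}$ has a continuous, positive, symmetric kernel $u_t(x,y)$. Let $\lambda_0=\inf\sigma(H)$ (a simple eigenvalue) and $\varphi_0$ the corresponding strictly positive, continuous, bounded eigenfunction with $\|\varphi_0\|_{L^2(dx)}=1$. Set $\mu(dx)=\varphi_0^2(x)\,dx$ (a probability measure), $q_t(x,y)=\dfrac{e^{\lambda_0t}u_t(x,y)}{\varphi_0(x)\varphi_0(y)}$ and $Q_th(x)=\int q_t(x,y)h(y)\,\mu(dy)$; $\{Q_t\}$ is a semigroup of contractions on every $L^p(\mu)$, $1\le p\le\infty$, and $q_t$ is symmetric.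 Assumption (A): there exist a strictly decreasing continuous $f:(0,\infty)\to(0,\infty)$, a strictly increasing continuous $g:[0,\infty)\to(0,\infty)$, constants $C_1,C_2\ge1$ and $R_0>0$ such that $C_1^{-1}f(|x|)\le\nu(x)\le C_1f(|x|)$ for $x\ne0$ and $C_2^{-1}g(|x|)\le V(x)\le C_2g(|x|)$ for $|x|\ge R_0$, and moreover: (A1) there is $C_3>0$ with $\int_{\{|x-y|>1,\,|y|>1\}}f(|x-y|)f(|y|)\,dy\le C_3f(|x|)$ for $|x|\ge1$; (A2) $(t,x)\mapsto p_t(x)$ is continuous on $(0,\infty)\times\mathbb R^d$ and for every $t_b>0$ there are $C_4,C_5>0$ with $p_t(x)\le C_4\big([e^{C_5t}f(|x|)]\wedge1\big)$ for $x\neq0$, $t\ge t_b$, and $\sup_{t\in(0,t_b]}\sup_{r\le|x|\le2}p_t(x)<\infty$ for every $r\in(0,1]$; (A3) there is $C_6\ge1$ with $g(r+1)\le C_6g(r)$ for $r\ge R_0$. Under (A), $f$ is a bijection of $(0,\infty)$ onto $(0,\infty)$ and $f^{-1}$, $(f^2)^{-1}$ denote the inverses. We write $f_1=f\wedge1$. Condition (D): the map $r\mapsto g(r)/|\log f(r)|$ is eventually decreasing and $\lim_{r\to\infty}g(r)/|\log f(r)|=0$. Heat kernel estimate (a known consequence of (A), used as standing input): for every $T>0$ there exist $\rho>1$, $C=C(T)>0$ and constants $K,\widetilde K>0$ independent of $T$ such that for all $x,y\in\mathbb R^d$ and $t\ge T$, $C^{-1}\max\{1,e^{\lambda_0t}\Gamma(\widetilde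 Kt,x,y)\}\le q_t(x,y)\le C\max\{1,e^{\lambda_0t}\Gamma(Kt,x,y)\}$, where $\Gamma(\tau,x,y)=\dfrac{\mathbf 1_{\{|x|,|y|>\rho\}}}{f_1(|x|)f_1(|y|)}\displaystyle\int_{\rho-1<|z|<|x|\vee|y|}f_1(|x-z|)f_1(|z-y|)e^{-\tau g(|z|)}\,dz$. Throughout, $K$ and $\widetilde K$ denote fixed constants for which this two-sided estimate holds. *)

theory Defs
  imports "HOL-Analysis.Analysis"
begin

definition Gt :: "(real \<Rightarrow> real) \<Rightarrow> (real \<Rightarrow> real) \<Rightarrow> real \<Rightarrow> real \<Rightarrow> real \<Rightarrow> real" where
  "Gt f g Kt t r = (f r)^2 * exp (Kt * t * g r)"

definition wt :: "(real \<Rightarrow> real) \<Rightarrow> real \<Rightarrow> real \<Rightarrow> real \<Rightarrow> real" where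
  "wt g K t r = (g r)^2 * exp (K * t * g r)"

definition alpha_t :: "(real \<Rightarrow> real) \<Rightarrow> real \<Rightarrow> real \<Rightarrow> real" where
  "alpha_t f \<kappa> u = inv_into {0<..} (\<lambda>r. (f r)^2) (\<kappa> / u)"

definition beta_t :: "(real \<Rightarrow> real) \<Rightarrow> (real \<Rightarrow> real) \<Rightarrow> real \<Rightarrow> real \<Rightarrow> real \<Rightarrow> real \<Rightarrow> real \<Rightarrow> real" where
  "beta_t f g Kt t R \<kappa>' u = inv_into {R..} (Gt f g Kt t) (\<kappa>' / u)"

end

theory Submission
  imports Defs "HOL-Real_Asymp.Real_Asymp"
begin

lemma cancel_gen: "(c::real) \<noteq> 0 \<Longrightarrow> c * (e / c * y) = e * y"
  by simp

locale L42 =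
  fixes f g :: "real \<Rightarrow> real" and Kt t :: real
  assumes f_pos: "\<And>r. r > 0 \<Longrightarrow> f r > 0"
    and f_decr: "\<And>r s. 0 < r \<Longrightarrow> r < s \<Longrightarrow> f s < f r"
    and f_cont: "continuous_on {0<..} f"
    and f_bij: "bij_betw f {0<..} {0<..}"
    and g_pos: "\<And>r. r \<ge> 0 \<Longrightarrow> g r > 0"
    and g_incr: "\<And>r s. 0 \<le> r \<Longrightarrow> r < s \<Longrightarrow> g r < g s"
    and g_cont: "continuous_on {0..} g"
    and D_decr: "\<exists>R. \<forall>r s. R \<le> r \<longrightarrow> r \<le> s \<longrightarrow>
                     g s / \<bar>ln (f s)\<bar> \<le> g r / \<bar>ln (f r)\<bar>"
    and D_lim: "((\<lambda>r. g r / \<bar>ln (f r)\<bar>) \<longlongrightarrow> 0) at_top"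
    and Kt_pos: "Kt > 0" and t_pos: "t > 0"
begin

abbreviation "c \<equiv> Kt * t"
abbreviation "G \<equiv> Gt f g Kt t"

lemma c_pos: "c > 0" using Kt_pos t_pos by simp

lemma cancel_c: "c * (e / c * y) = e * y"
  using cancel_gen[of c e y] Kt_pos t_pos by simp

definition finv where "finv y = inv_into {0<..} f y"

lemma finv: "y > 0 \<Longrightarrow> finv y > 0 \<and> f (finv y) = y"
proof -
  assume "y>0"
  hence "y \<in> f ` {0<..}" using f_bij by (simp add: bij_betw_def)
  thus ?thesis unfolding finv_def
    by (metis f_inv_into_f greaterThan_iff inv_into_into)
qed

lemma finv_f: "x > 0 \<Longrightarrow> finv (f x) = x"
  using f_bij unfolding finv_def bij_betw_def by (simp add: inv_into_f_f)

lemma le_finv: "x > 0 \<Longrightarrow> y > 0 \<Longrightarrow> y \<le> f x \<Longrightarrow> x \<le> finv y"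
proof (rule ccontr)
  assume "x>0" "y>0" "y \<le> f x" "\<not> x \<le> finv y"
  have "finv y > 0" "f (finv y) = y" using finv \<open>y>0\<close> by auto
  then have "f x < f (finv y)" using f_decr[of "finv y" x] \<open>\<not> x \<le> finv y\<close> by auto
  then show False using \<open>f (finv y) = y\<close> \<open>y \<le> f x\<close> by auto
qed

lemma finv_le: "x > 0 \<Longrightarrow> y > 0 \<Longrightarrow> f x \<le> y \<Longrightarrow> finv y \<le> x"
proof (rule ccontr)
  assume "x>0" "y>0" "f x \<le> y" "\<not> finv y \<le> x"
  have "finv y > 0" "f (finv y) = y" using finv \<open>y>0\<close> by auto
  then have "f (finv y) < f x" using f_decr[of x "finv y"] \<open>\<not> finv y \<le> x\<close> \<open>x>0\<close> by auto
  then show False using \<open>f (finv y) = y\<close> \<open>f x \<le> y\<close> by auto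
qed

lemma g_mono: "0 \<le> r \<Longrightarrow> r \<le> s \<Longrightarrow> g r \<le> g s"
proof -
  assume "0 \<le> r" "r \<le> s"
  then show "g r \<le> g s" using g_incr[of r s] by (cases "r = s") auto
qed

lemma f_lim: "(f \<longlongrightarrow> 0) at_top"
proof (rule order_tendstoI)
  fix a :: real assume "a < 0" show "eventually (\<lambda>r. a < f r) at_top"
    by (rule eventually_mono[OF eventually_gt_at_top[of 0]]) (use f_pos \<open>a<0\<close> in force)
next
  fix a :: real assume "0 < a"
  then have "finv a > 0" "f (finv a) = a" using finv by auto
  then show "eventually (\<lambda>r. f r < a) at_top"
    by (intro eventually_mono[OF eventually_gt_at_top[of "finv a"]]) (use f_decr in force)
qed

lemma f_at_right: "filterlim f (at_right 0) at_top"
  by (rule tendsto_imp_filterlim_at_right[OF f_lim])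
     (rule eventually_mono[OF eventually_gt_at_top[of 0]], use f_pos in auto)

lemma L_inf: "filterlim (\<lambda>r. - ln (f r)) at_top at_top"
  using filterlim_compose[OF ln_at_0 f_at_right] filterlim_uminus_at_bot[of "\<lambda>r. ln (f r)"] by simp

lemma ev_f_lt1: "eventually (\<lambda>r. 0 < r \<and> f r < 1) at_top"
  using order_tendstoD(2)[OF f_lim zero_less_one] eventually_gt_at_top[of 0]
  by eventually_elim auto

lemma g_small: "e > 0 \<Longrightarrow> eventually (\<lambda>r. 0 < r \<and> f r < 1 \<and> g r \<le> e * (- ln (f r))) at_top"
proof -
  assume "e > 0"
  show ?thesis using order_tendstoD(2)[OF D_lim \<open>e>0\<close>] ev_f_lt1
proof eventually_elim
  case (elim r)
  have "ln (f r) < 0" using elim f_pos by simp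
  then have "\<bar>ln (f r)\<bar> = - ln (f r)" by simp
  with elim have "g r / (- ln (f r)) < e" by simp
  then have "g r < e * (- ln (f r))" using \<open>ln (f r) < 0\<close> pos_divide_less_eq[of "- ln (f r)" "g r" e] by linarith
  with elim show ?case by simp
qed
qed

lemma G_exp: "r > 0 \<Longrightarrow> G r = exp (2 * ln (f r) + c * g r)"
proof -
  assume "r > 0"
  then have "f r > 0" by (rule f_pos)
  then have "f r ^ 2 = exp (2 * ln (f r))"
    by (metis exp_ln exp_of_nat_mult of_nat_numeral)
  then show ?thesis by (simp add: Gt_def exp_add mult.assoc)
qed

lemma G_upper:
  assumes "\<epsilon> > 0"
  shows "eventually (\<lambda>r. 0 < r \<and> f r < 1 \<and> f r ^ 2 \<le> G r \<and> G r \<le> f r powr (2 - \<epsilon>)) at_top"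
  using g_small[OF divide_pos_pos[OF assms c_pos]]
proof eventually_elim
  case (elim r)
  have fr: "f r > 0" using f_pos elim by auto
  have gr: "g r > 0" using g_pos elim by auto
  have "c * g r \<le> c * (\<epsilon> / c * (- ln (f r)))" using elim c_pos by (intro mult_left_mono) auto
  also have "\<dots> = - \<epsilon> * ln (f r)" using cancel_c[of "\<epsilon>" "- ln (f r)"] by simp
  finally have *: "c * g r \<le> - \<epsilon> * ln (f r)" .
  have "G r = exp (2 * ln (f r) + c * g r)" using G_exp elim by auto
  also have "\<dots> \<le> exp ((2 - \<epsilon>) * ln (f r))" using * by (simp add: algebra_simps)
  also have "\<dots> = f r powr (2 - \<epsilon>)" using fr by (simp add: powr_def)
  finally have up: "G r \<le> f r powr (2 - \<epsilon>)" .
  have e1: "1 \<le> exp (c * g r)" using gr c_pos by simp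
  have "f r ^ 2 \<le> f r ^ 2 * exp (c * g r)" using mult_left_mono[OF e1 zero_le_power2[of "f r"]] by simp
  then show ?case using elim up by (simp add: Gt_def mult.assoc)
qed

lemma G_lim: "(G \<longlongrightarrow> 0) at_top"
proof (rule tendsto_sandwich[of "\<lambda>_. 0" _ _ f])
  show "eventually (\<lambda>r. 0 \<le> G r) at_top"
    by (rule eventually_mono[OF G_upper[of 1]]) (auto intro: order_trans[OF zero_le_power2])
  show "eventually (\<lambda>r. G r \<le> f r) at_top"
  proof (rule eventually_mono[OF G_upper[of 1]])
    fix r assume "0 < r \<and> f r < 1 \<and> f r ^ 2 \<le> G r \<and> G r \<le> f r powr (2 - 1)"
    then show "G r \<le> f r" using f_pos[of r] by simp
  qed simp
qed (simp_all add: f_lim)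

lemma G_cont: "R > 0 \<Longrightarrow> continuous_on {R..} G"
proof -
  assume "R > 0"
  have "continuous_on {R..} f" by (rule continuous_on_subset[OF f_cont]) (use \<open>R>0\<close> in auto)
  moreover have "continuous_on {R..} g" by (rule continuous_on_subset[OF g_cont]) (use \<open>R>0\<close> in auto)
  ultimately show ?thesis unfolding Gt_def by (intro continuous_intros) auto
qed

lemma G_decr_ex: "\<exists>R>0. \<forall>r s. R \<le> r \<longrightarrow> r < s \<longrightarrow> G s < G r"
proof -
  obtain R1 where R1: "\<forall>r s. R1 \<le> r \<longrightarrow> r \<le> s \<longrightarrow> g s / \<bar>ln (f s)\<bar> \<le> g r / \<bar>ln (f r)\<bar>"
    using D_decr by blast
  have "eventually (\<lambda>r. 0 < r \<and> f r < 1 \<and> g r / \<bar>ln (f r)\<bar> < 1 / c) at_top"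
    using order_tendstoD(2)[OF D_lim divide_pos_pos[OF zero_less_one c_pos]] ev_f_lt1 by eventually_elim auto
  then obtain R2 where R2: "\<And>r. r \<ge> R2 \<Longrightarrow> 0 < r \<and> f r < 1 \<and> g r / \<bar>ln (f r)\<bar> < 1 / c"
    by (auto simp: eventually_at_top_linorder)
  define R where "R = max 1 (max R1 R2)"
  have "\<forall>r s. R \<le> r \<longrightarrow> r < s \<longrightarrow> G s < G r"
  proof (intro allI impI)
    fix r s assume rs: "R \<le> r" "r < s"
    have r: "0 < r" "f r < 1" "g r / \<bar>ln (f r)\<bar> < 1 / c" using R2[of r] rs R_def by auto
    have s: "0 < s" "f s < 1" "g s / \<bar>ln (f s)\<bar> < 1 / c" using R2[of s] rs R_def by auto
    have hs: "g s / \<bar>ln (f s)\<bar> \<le> g r / \<bar>ln (f r)\<bar>" using R1 rs R_def by auto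
    define Lr where "Lr = - ln (f r)"
    define Ls where "Ls = - ln (f s)"
    define hr where "hr = g r / \<bar>ln (f r)\<bar>"
    define hs' where "hs' = g s / \<bar>ln (f s)\<bar>"
    have fr: "f r > 0" "f s > 0" using f_pos r s by auto
    have Lr: "Lr > 0" unfolding Lr_def using r fr by simp
    have Ls: "Ls > Lr" unfolding Lr_def Ls_def using f_decr[of r s] rs r fr by simp
    have gr: "g r = hr * Lr" unfolding hr_def Lr_def using Lr Lr_def by simp
    have gs: "g s = hs' * Ls" unfolding hs'_def Ls_def using Lr Ls Ls_def by simp
    have c1: "c * hr < 1" using r c_pos unfolding hr_def by (simp add: field_simps)
    have c2: "c * hs' \<le> c * hr" unfolding hr_def hs'_def by (rule mult_left_mono[OF hs]) (use c_pos in simp)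
    have "Lr * (2 - c * hr) < Ls * (2 - c * hr)" using Ls c1 by (intro mult_strict_right_mono) auto
    also have "\<dots> \<le> Ls * (2 - c * hs')" using c2 Ls Lr by (intro mult_left_mono) auto
    finally have "Lr * (2 - c * hr) < Ls * (2 - c * hs')" .
    then have "2 * ln (f s) + c * g s < 2 * ln (f r) + c * g r"
      unfolding gr gs Lr_def Ls_def by (simp add: algebra_simps)
    then show "G s < G r" using G_exp r s by simp
  qed
  then show ?thesis using R_def by (intro exI[of _ R]) auto
qed

lemma Phi_lim:
  assumes a: "a > 0" and d: "\<delta> > 0"
  shows "((\<lambda>r. g r ^ 2 * exp (a * g r) * f r powr (2 * \<delta>)) \<longlongrightarrow> 0) at_top"
proof (rule tendsto_sandwich[of "\<lambda>_. 0" _ _ "\<lambda>r. (\<delta>/a)^2 * (- ln (f r))^2 * exp (- \<delta> * (- ln (f r)))"])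
  show "eventually (\<lambda>r. 0 \<le> g r ^ 2 * exp (a * g r) * f r powr (2 * \<delta>)) at_top" by simp
  show "eventually (\<lambda>r. g r ^ 2 * exp (a * g r) * f r powr (2 * \<delta>)
      \<le> (\<delta>/a)^2 * (- ln (f r))^2 * exp (- \<delta> * (- ln (f r)))) at_top"
    using g_small[OF divide_pos_pos[OF d a]]
  proof eventually_elim
    case (elim r)
    have fr: "f r > 0" using f_pos elim by auto
    have gr: "g r > 0" using g_pos elim by auto
    have "a * g r \<le> a * (\<delta> / a * (- ln (f r)))" using elim a by (intro mult_left_mono) auto
    also have "\<dots> = \<delta> * (- ln (f r))" using a by simp
    finally have *: "a * g r \<le> \<delta> * (- ln (f r))" .
    have g2: "g r ^ 2 \<le> (\<delta> / a * (- ln (f r))) ^ 2" using gr elim by (intro power_mono) auto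
    have "exp (a * g r) * f r powr (2 * \<delta>) = exp (a * g r + 2 * \<delta> * ln (f r))"
      using fr by (simp add: powr_def exp_add)
    also have "\<dots> \<le> exp (- \<delta> * (- ln (f r)))" using * by simp
    finally have e: "exp (a * g r) * f r powr (2 * \<delta>) \<le> exp (- \<delta> * (- ln (f r)))" .
    have "g r ^ 2 * exp (a * g r) * f r powr (2 * \<delta>) = g r ^ 2 * (exp (a * g r) * f r powr (2 * \<delta>))"
      by simp
    also have "\<dots> \<le> (\<delta> / a * (- ln (f r))) ^ 2 * exp (- \<delta> * (- ln (f r)))"
      using g2 e by (intro mult_mono) auto
    also have "\<dots> = (\<delta>/a)^2 * (- ln (f r))^2 * exp (- \<delta> * (- ln (f r)))"
      using a by (simp add: power2_eq_square field_simps)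
    finally show ?case .
  qed
  have "((\<lambda>x. (\<delta>/a)^2 * x^2 * exp (- \<delta> * x)) \<longlongrightarrow> 0) at_top"
    using d by real_asymp
  then show "((\<lambda>r. (\<delta>/a)^2 * (- ln (f r))^2 * exp (- \<delta> * (- ln (f r)))) \<longlongrightarrow> 0) at_top"
    using filterlim_compose[OF _ L_inf] by blast
qed auto

lemma f_inj: "inj_on f {0<..}" using f_bij by (simp add: bij_betw_def)

lemma alpha_eq:
  assumes k: "\<kappa> > 0" and u: "u > 0"
  shows "alpha_t f \<kappa> u = finv (sqrt (\<kappa> / u))"
proof -
  define x where "x = finv (sqrt (\<kappa> / u))"
  have sp: "sqrt (\<kappa> / u) > 0" using k u by simp
  have x: "x > 0" "f x = sqrt (\<kappa> / u)" using finv[OF sp] x_def by auto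
  have fx2: "f x ^ 2 = \<kappa> / u" using x k u by simp
  have inj: "inj_on (\<lambda>r. f r ^ 2) {0<..}"
  proof (rule inj_onI)
    fix a b :: real assume ab: "a \<in> {0<..}" "b \<in> {0<..}" "f a ^ 2 = f b ^ 2"
    then have "f a = f b" using f_pos[of a] f_pos[of b] by (simp add: power2_eq_iff_nonneg)
    then show "a = b" using f_inj ab by (auto simp: inj_on_def)
  qed
  have "alpha_t f \<kappa> u = inv_into {0<..} (\<lambda>r. f r ^ 2) ((\<lambda>r. f r ^ 2) x)"
    unfolding alpha_t_def fx2 by simp
  also have "\<dots> = x" by (rule inv_into_f_f[OF inj]) (use x in simp)
  finally show ?thesis unfolding x_def .
qed

lemma finv_at_top: "filterlim finv at_top (at_right 0)"
proof (subst filterlim_at_top, intro allI)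
  fix Z :: real
  define M where "M = max Z 1"
  have fM: "f M > 0" using f_pos M_def by simp
  show "eventually (\<lambda>y. Z \<le> finv y) (at_right 0)"
    unfolding eventually_at_right[OF fM]
  proof (intro exI[of _ "f M"] conjI allI impI)
    fix y :: real assume "0 < y" "y < f M"
    then have "M \<le> finv y" using le_finv[of M y] M_def by simp
    then show "Z \<le> finv y" using M_def by simp
  qed (use fM in auto)
qed

lemma s_right: "\<kappa> > 0 \<Longrightarrow> filterlim (\<lambda>u. sqrt (\<kappa> / u)) (at_right 0) at_top"
  by real_asymp

lemma alpha_lim:
  assumes k: "\<kappa> > 0" and Kp: "K > 0" and d: "\<delta> > 0"
  shows "((\<lambda>u. wt g K t (alpha_t f \<kappa> u) / u powr \<delta>) \<longlongrightarrow> 0) at_top"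
proof -
  have a: "K * t > 0" using Kp t_pos by simp
  have lim1: "((\<lambda>u. (\<lambda>r. g r ^ 2 * exp (K * t * g r) * f r powr (2 * \<delta>)) (finv (sqrt (\<kappa> / u)))) \<longlongrightarrow> 0) at_top"
    using filterlim_compose[OF Phi_lim[OF a d] filterlim_compose[OF finv_at_top s_right[OF k]]] .
  have lim2: "((\<lambda>u. g (finv (sqrt (\<kappa> / u))) ^ 2 * exp (K * t * g (finv (sqrt (\<kappa> / u))))
       * f (finv (sqrt (\<kappa> / u))) powr (2 * \<delta>) / \<kappa> powr \<delta>) \<longlongrightarrow> 0) at_top"
    using tendsto_divide_zero[OF lim1] by simp
  show ?thesis
  proof (rule Lim_transform_eventually[OF lim2])
    show "eventually (\<lambda>u. g (finv (sqrt (\<kappa> / u))) ^ 2 * exp (K * t * g (finv (sqrt (\<kappa> / u))))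
       * f (finv (sqrt (\<kappa> / u))) powr (2 * \<delta>) / \<kappa> powr \<delta> = wt g K t (alpha_t f \<kappa> u) / u powr \<delta>) at_top"
    proof (rule eventually_mono[OF eventually_gt_at_top[of 0]])
      fix u :: real assume u: "u > 0"
      define x where "x = finv (sqrt (\<kappa> / u))"
      have sp: "sqrt (\<kappa> / u) > 0" using k u by simp
      have x: "x > 0" "f x = sqrt (\<kappa> / u)" using finv[OF sp] x_def by auto
      have fx: "f x > 0" using x sp by simp
      have fx2: "u * f x ^ 2 = \<kappa>" using x k u by simp
      have "\<kappa> powr \<delta> = u powr \<delta> * (f x ^ 2) powr \<delta>"
        using fx2 u by (metis powr_mult less_imp_le zero_le_power2)
      also have "(f x ^ 2) powr \<delta> = f x powr (2 * \<delta>)"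
        using fx by (simp add: powr_powr flip: powr_numeral)
      finally have kd: "\<kappa> powr \<delta> = u powr \<delta> * f x powr (2 * \<delta>)" .
      have up: "u powr \<delta> > 0" using u by simp
      have kp: "\<kappa> powr \<delta> > 0" using k by simp
      show "g x ^ 2 * exp (K * t * g x) * f x powr (2 * \<delta>) / \<kappa> powr \<delta> = wt g K t (alpha_t f \<kappa> u) / u powr \<delta>"
        unfolding alpha_eq[OF k u] x_def[symmetric] wt_def kd using up fx
        by (simp add: field_simps)
    qed
  qed
qed

end

locale L42R = L42 +
  fixes R \<kappa>' :: real
  assumes R_pos: "R > 0"
    and G_contR: "continuous_on {R..} (Gt f g Kt t)"
    and G_decrR: "\<forall>r s. R \<le> r \<longrightarrow> r < s \<longrightarrow> Gt f g Kt t s < Gt f g Kt t r"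
    and kp: "\<kappa>' > 0"
begin

abbreviation "beta \<equiv> beta_t f g Kt t R \<kappa>'"

lemma G_pos: "r > 0 \<Longrightarrow> G r > 0"
  using f_pos[of r] by (simp add: Gt_def)

lemma G_decr_le: "R \<le> r \<Longrightarrow> r \<le> s \<Longrightarrow> G s \<le> G r"
  using G_decrR by (cases "r = s") (auto simp: less_imp_le)

lemma beta_props: "eventually (\<lambda>u. u > 0 \<and> R \<le> beta u \<and> G (beta u) = \<kappa>' / u) at_top"
proof -
  have GR: "G R > 0" using G_pos R_pos by simp
  show ?thesis
  proof (rule eventually_mono[OF eventually_gt_at_top[of "\<kappa>' / G R"]])
    fix u assume u: "\<kappa>' / G R < u"
    have u0: "u > 0" using u kp GR by (smt (verit) divide_pos_pos)
    define v where "v = \<kappa>' / u"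
    have v0: "v > 0" using kp u0 v_def by simp
    have vR: "v < G R" using u u0 GR kp unfolding v_def by (simp add: divide_less_eq field_simps)
    obtain N where N: "\<And>r. r \<ge> N \<Longrightarrow> G r < v"
      using order_tendstoD(2)[OF G_lim v0] by (auto simp: eventually_at_top_linorder)
    define r' where "r' = max N R"
    have "\<exists>x. R \<le> x \<and> x \<le> r' \<and> G x = v"
      by (rule IVT2') (use N[of r'] r'_def vR in \<open>auto intro: continuous_on_subset[OF G_contR]\<close>)
    then have vin: "v \<in> G ` {R..}" by auto
    have "inv_into {R..} G v \<in> {R..}" by (rule inv_into_into[OF vin])
    moreover have "G (inv_into {R..} G v) = v" by (rule f_inv_into_f[OF vin])
    ultimately have "R \<le> inv_into {R..} G v" "G (inv_into {R..} G v) = v" by auto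
    then show "u > 0 \<and> R \<le> beta u \<and> G (beta u) = \<kappa>' / u"
      using u0 unfolding beta_t_def v_def by auto
  qed
qed

lemma beta_at_top: "filterlim beta at_top at_top"
proof (subst filterlim_at_top, intro allI)
  fix Z :: real
  define M where "M = max Z R"
  have GM: "G M > 0" using G_pos R_pos M_def by simp
  show "eventually (\<lambda>u. Z \<le> beta u) at_top"
    using beta_props eventually_gt_at_top[of "\<kappa>' / G M"]
  proof eventually_elim
    case (elim u)
    have "\<kappa>' / u < G M" using elim GM kp by (simp add: divide_less_eq field_simps)
    have "M \<le> beta u"
    proof (rule ccontr)
      assume "\<not> M \<le> beta u"
      then have "G M < G (beta u)" using G_decrR elim by auto
      then show False using elim \<open>\<kappa>' / u < G M\<close> by simp
    qed
    then show ?case using M_def by simp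
  qed
qed

lemma beta_lim:
  assumes d: "\<delta> > 0"
  shows "((\<lambda>u. wt g Kt t (beta u) / u powr \<delta>) \<longlongrightarrow> 0) at_top"
proof -
  have a: "c * (1 + \<delta>) > 0" using c_pos d by simp
  have lim1: "((\<lambda>u. (\<lambda>r. g r ^ 2 * exp (c * (1 + \<delta>) * g r) * f r powr (2 * \<delta>)) (beta u)) \<longlongrightarrow> 0) at_top"
    using filterlim_compose[OF Phi_lim[OF a d] beta_at_top] .
  have lim2: "((\<lambda>u. g (beta u) ^ 2 * exp (c * (1 + \<delta>) * g (beta u)) * f (beta u) powr (2 * \<delta>)
      / \<kappa>' powr \<delta>) \<longlongrightarrow> 0) at_top"
    using tendsto_divide_zero[OF lim1] by simp
  show ?thesis
  proof (rule Lim_transform_eventually[OF lim2])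
    show "eventually (\<lambda>u. g (beta u) ^ 2 * exp (c * (1 + \<delta>) * g (beta u)) * f (beta u) powr (2 * \<delta>)
      / \<kappa>' powr \<delta> = wt g Kt t (beta u) / u powr \<delta>) at_top"
      using beta_props
    proof eventually_elim
      case (elim u)
      define x where "x = beta u"
      have x: "x > 0" "G x = \<kappa>' / u" using elim R_pos x_def by auto
      have fx: "f x > 0" using f_pos x by simp
      have u: "u > 0" using elim by simp
      have Gx: "G x = exp (2 * ln (f x) + c * g x)" using G_exp x by simp
      have "\<kappa>' = u * G x" using x u by simp
      then have "\<kappa>' powr \<delta> = u powr \<delta> * G x powr \<delta>"
        using u G_pos[OF x(1)] by (simp add: powr_mult)
      also have "G x powr \<delta> = exp (\<delta> * (2 * ln (f x) + c * g x))"
        unfolding Gx by (simp add: powr_def)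
      finally have kd: "\<kappa>' powr \<delta> = u powr \<delta> * exp (\<delta> * (2 * ln (f x) + c * g x))" .
      have fp: "f x powr (2 * \<delta>) = exp (2 * \<delta> * ln (f x))" using fx by (simp add: powr_def)
      have ee: "exp (c * (1 + \<delta>) * g x) * exp (2 * \<delta> * ln (f x)) = exp (c * g x) * exp (\<delta> * (2 * ln (f x) + c * g x))"
        by (simp add: exp_add[symmetric] algebra_simps)
      have up: "u powr \<delta> > 0" using u by simp
      have "g x ^ 2 * exp (c * (1 + \<delta>) * g x) * f x powr (2 * \<delta>) / \<kappa>' powr \<delta>
          = g x ^ 2 * (exp (c * (1 + \<delta>) * g x) * exp (2 * \<delta> * ln (f x))) / \<kappa>' powr \<delta>"
        unfolding fp by (simp add: mult.assoc)
      also have "\<dots> = g x ^ 2 * exp (c * g x) / u powr \<delta>"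
        unfolding ee kd using up by (simp add: field_simps)
      finally show ?case unfolding x_def wt_def by (simp add: mult.assoc)
    qed
  qed
qed

lemma ev_compose: "filterlim h F2 F1 \<Longrightarrow> eventually P F2 \<Longrightarrow> eventually (\<lambda>x. P (h x)) F1"
  by (simp add: filterlim_iff)

lemma part_b:
  assumes k: "\<kappa> > 0"
    and H: "\<forall>c>0. \<forall>lam\<ge>1.
            Limsup (at_right 0)
              (\<lambda>s. ereal (g (inv_into {0<..} f (c * s powr lam)) / g (inv_into {0<..} f s)))
            \<le> ereal (lam powr \<omega>)"
  shows "((\<lambda>u. g (beta u) / g (alpha_t f \<kappa> u)) \<longlongrightarrow> 1) at_top"
proof -
  have Hev: "eventually (\<lambda>s. g (finv (c0 * s powr lam)) / g (finv s) < B) (at_right 0)"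
    if "c0 > 0" "lam \<ge> 1" "lam powr \<omega> < B" for c0 lam B
  proof -
    have "Limsup (at_right 0) (\<lambda>s. ereal (g (finv (c0 * s powr lam)) / g (finv s))) \<le> ereal (lam powr \<omega>)"
      using H that unfolding finv_def by auto
    also have "\<dots> < ereal B" using that by simp
    finally have "eventually (\<lambda>s. ereal (g (finv (c0 * s powr lam)) / g (finv s)) < ereal B) (at_right 0)"
      by (rule Limsup_lessD)
    then show ?thesis by simp
  qed
  have ev_alpha: "eventually (\<lambda>u. alpha_t f \<kappa> u = finv (sqrt (\<kappa> / u))) at_top"
    by (rule eventually_mono[OF eventually_gt_at_top[of 0]]) (use alpha_eq k in auto)
  show ?thesis
  proof (rule order_tendstoI)
    fix a :: real assume a: "a < 1"
    show "eventually (\<lambda>u. a < g (beta u) / g (alpha_t f \<kappa> u)) at_top"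
    proof (cases "a \<le> 0")
      case True
      show ?thesis using beta_props ev_alpha
      proof eventually_elim
        case (elim u)
        have "finv (sqrt (\<kappa> / u)) > 0" using finv k elim by simp
        then have "g (alpha_t f \<kappa> u) > 0" "g (beta u) > 0" using elim g_pos R_pos by auto
        then have "g (beta u) / g (alpha_t f \<kappa> u) > 0" by simp
        then show ?case using True by linarith
      qed
    next
      case False
      define c0 where "c0 = sqrt (\<kappa> / \<kappa>')"
      have c0: "c0 > 0" using k kp c0_def by simp
      have ev1: "eventually (\<lambda>s. g (finv (c0 * s powr 1)) / g (finv s) < 1 / a) (at_right 0)"
        by (rule Hev) (use c0 False a in auto)
      have ev2: "eventually (\<lambda>u. g (finv (c0 * sqrt (\<kappa>' / u) powr 1)) / g (finv (sqrt (\<kappa>' / u))) < 1 / a) at_top"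
        using ev_compose[OF s_right[OF kp] ev1] .
      show ?thesis using ev2 beta_props ev_alpha
      proof eventually_elim
        case (elim u)
        have u: "u > 0" using elim by simp
        have sq: "c0 * sqrt (\<kappa>' / u) powr 1 = sqrt (\<kappa> / u)"
          using u k kp unfolding c0_def by (simp add: real_sqrt_mult[symmetric])
        define A where "A = g (finv (sqrt (\<kappa> / u)))"
        define Bq where "Bq = g (finv (sqrt (\<kappa>' / u)))"
        have A: "A > 0" using finv[of "sqrt (\<kappa> / u)"] k u g_pos unfolding A_def by simp
        have Bq: "Bq > 0" using finv[of "sqrt (\<kappa>' / u)"] kp u g_pos unfolding Bq_def by simp
        have "A / Bq < 1 / a" using elim sq unfolding A_def Bq_def by simp
        then have "a * A < Bq" using A Bq False by (simp add: field_simps)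
        have b0: "beta u > 0" using elim R_pos by simp
        have "0 \<le> c * g (beta u)" using c_pos g_pos[of "beta u"] b0 by simp
        then have "f (beta u) ^ 2 \<le> G (beta u)" using f_pos[OF b0] by (simp add: Gt_def)
        then have "f (beta u) \<le> sqrt (\<kappa>' / u)" using elim by (intro real_le_rsqrt) simp
        then have "finv (sqrt (\<kappa>' / u)) \<le> beta u" using finv_le[OF b0] kp u by simp
        then have "Bq \<le> g (beta u)" unfolding Bq_def
          using finv[of "sqrt (\<kappa>' / u)"] kp u by (intro g_mono) auto
        then have "a * A < g (beta u)" using \<open>a * A < Bq\<close> by simp
        then show ?case using elim A unfolding A_def by (simp add: field_simps)
      qed
    qed
  next
    fix a :: real assume a: "a > 1"
    have "((\<lambda>e. 2 / (2 - e)) \<longlongrightarrow> 1) (at_right (0::real))" by real_asymp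
    then have "((\<lambda>e. (2 / (2 - e)) powr \<omega>) \<longlongrightarrow> 1 powr \<omega>) (at_right (0::real))"
      by (rule tendsto_powr) (auto intro: tendsto_const)
    then have "eventually (\<lambda>e. (2 / (2 - e)) powr \<omega> < a) (at_right (0::real))"
      using a by (intro order_tendstoD(2)) auto
    moreover have "eventually (\<lambda>e. e < (1::real)) (at_right 0)"
      unfolding eventually_at_right_field by (intro exI[of _ 1]) auto
    ultimately have "eventually (\<lambda>e. 0 < e \<and> e < 1 \<and> (2 / (2 - e)) powr \<omega> < a) (at_right (0::real))"
      using eventually_at_right_less[of 0] by eventually_elim auto
    then obtain \<epsilon> where e: "0 < \<epsilon>" "\<epsilon> < 1" "(2 / (2 - \<epsilon>)) powr \<omega> < a"
      using eventually_happens'[OF trivial_limit_at_right_real] by blast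
    define lam where "lam = 2 / (2 - \<epsilon>)"
    define p where "p = 1 / (2 - \<epsilon>)"
    define c1 where "c1 = (\<kappa>' / \<kappa>) powr p"
    have lam1: "lam \<ge> 1" using e unfolding lam_def by simp
    have p0: "p > 0" using e unfolding p_def by simp
    have c1: "c1 > 0" using k kp unfolding c1_def by simp
    have ev1: "eventually (\<lambda>s. g (finv (c1 * s powr lam)) / g (finv s) < a) (at_right 0)"
      by (rule Hev) (use c1 lam1 e lam_def in auto)
    have ev2: "eventually (\<lambda>u. g (finv (c1 * sqrt (\<kappa> / u) powr lam)) / g (finv (sqrt (\<kappa> / u))) < a) at_top"
      using ev_compose[OF s_right[OF k] ev1] .
    have ev3: "eventually (\<lambda>u. 0 < beta u \<and> f (beta u) < 1 \<and> f (beta u) ^ 2 \<le> G (beta u)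
          \<and> G (beta u) \<le> f (beta u) powr (2 - \<epsilon>)) at_top"
      using ev_compose[OF beta_at_top G_upper[OF e(1)]] .
    show "eventually (\<lambda>u. g (beta u) / g (alpha_t f \<kappa> u) < a) at_top"
      using ev2 ev3 beta_props ev_alpha
    proof eventually_elim
      case (elim u)
      have u: "u > 0" using elim by simp
      have b0: "beta u > 0" using elim by simp
      have fb: "f (beta u) > 0" using f_pos[OF b0] .
      have "sqrt (\<kappa> / u) powr lam = ((\<kappa> / u) powr (1/2)) powr lam"
        using k u by (simp add: powr_half_sqrt)
      also have "\<dots> = (\<kappa> / u) powr p"
        unfolding powr_powr lam_def p_def by simp
      finally have "c1 * sqrt (\<kappa> / u) powr lam = (\<kappa>' / \<kappa>) powr p * (\<kappa> / u) powr p"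
        unfolding c1_def by simp
      also have "\<dots> = (\<kappa>' / u) powr p"
        using k kp u by (simp add: powr_mult[symmetric])
      finally have eq: "c1 * sqrt (\<kappa> / u) powr lam = (\<kappa>' / u) powr p" .
      have "(\<kappa>' / u) powr p \<le> (f (beta u) powr (2 - \<epsilon>)) powr p"
        using elim kp u p0 by (intro powr_mono2) auto
      also have "\<dots> = f (beta u)"
        using fb e unfolding powr_powr p_def by simp
      finally have le: "(\<kappa>' / u) powr p \<le> f (beta u)" .
      have pos: "(\<kappa>' / u) powr p > 0" using kp u by simp
      have "beta u \<le> finv ((\<kappa>' / u) powr p)" using le_finv[OF b0 pos le] .
      then have gb: "g (beta u) \<le> g (finv ((\<kappa>' / u) powr p))" using b0 by (intro g_mono) auto
      define A where "A = g (finv (sqrt (\<kappa> / u)))"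
      have A: "A > 0" using finv[of "sqrt (\<kappa> / u)"] k u g_pos unfolding A_def by simp
      have "g (finv ((\<kappa>' / u) powr p)) / A < a" using elim eq unfolding A_def by simp
      then have "g (beta u) / A < a" using gb A by (smt (verit) divide_right_mono)
      then show ?case using elim unfolding A_def by simp
    qed
  qed
qed

end

theorem lemma4p2:
  fixes f g :: "real \<Rightarrow> real"
    and K Kt t \<kappa> \<kappa>' C3 C6 R0 :: real
  assumes f_pos: "\<And>r. r > 0 \<Longrightarrow> f r > 0"
    and f_decr: "\<And>r s. 0 < r \<Longrightarrow> r < s \<Longrightarrow> f s < f r"
    and f_cont: "continuous_on {0<..} f"
    and f_bij: "bij_betw f {0<..} {0<..}"
    and g_pos: "\<And>r. r \<ge> 0 \<Longrightarrow> g r > 0"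
    and g_incr: "\<And>r s. 0 \<le> r \<Longrightarrow> r < s \<Longrightarrow> g r < g s"
    and g_cont: "continuous_on {0..} g"
    and g_infty: "filterlim g at_top at_top"
    and A1: "C3 > 0 \<and> (\<forall>x::'d::euclidean_space. norm x \<ge> 1 \<longrightarrow>
              (\<integral>\<^sup>+ y. indicator {y. norm (x - y) > 1 \<and> norm y > 1} y
                  * ennreal (f (norm (x - y)) * f (norm y)) \<partial>lborel)
              \<le> ennreal (C3 * f (norm x)))"
    and A3: "R0 > 0" "C6 \<ge> 1" "\<And>r. r \<ge> R0 \<Longrightarrow> g (r + 1) \<le> C6 * g r"
    and D_decr: "\<exists>R. \<forall>r s. R \<le> r \<longrightarrow> r \<le> s \<longrightarrow>
                     g s / \<bar>ln (f s)\<bar> \<le> g r / \<bar>ln (f r)\<bar>"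
    and D_lim: "((\<lambda>r. g r / \<bar>ln (f r)\<bar>) \<longlongrightarrow> 0) at_top"
    and K_pos: "K > 0" and Kt_pos: "Kt > 0"
    and t_pos: "t > 0"
    and kappa_pos: "\<kappa> > 0" and kappa'_pos: "\<kappa>' > 0"
  shows
    \<comment> \<open>(a), first part\<close>
    "(\<forall>\<epsilon>. 0 < \<epsilon> \<and> \<epsilon> < 1 \<longrightarrow> (\<exists>r\<epsilon>>0. \<forall>r>r\<epsilon>.
        (f r)^2 \<le> Gt f g Kt t r \<and> Gt f g Kt t r \<le> f r powr (2 - \<epsilon>)))
   \<comment> \<open>existence of a half-line on which G_t is continuous and strictly decreasing\<close>
   \<and> (\<exists>R>0. continuous_on {R..} (Gt f g Kt t) \<and>
        (\<forall>r s. R \<le> r \<longrightarrow> r < s \<longrightarrow> Gt f g Kt t s < Gt f g Kt t r))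
   \<comment> \<open>(a), second part, for any such half-line\<close>
   \<and> (\<forall>R>0. continuous_on {R..} (Gt f g Kt t) \<and>
        (\<forall>r s. R \<le> r \<longrightarrow> r < s \<longrightarrow> Gt f g Kt t s < Gt f g Kt t r) \<longrightarrow>
      (\<forall>\<delta>>0.
        ((\<lambda>u. wt g K t (alpha_t f \<kappa> u) / u powr \<delta>) \<longlongrightarrow> 0) at_top \<and>
        ((\<lambda>u. wt g Kt t (beta_t f g Kt t R \<kappa>' u) / u powr \<delta>) \<longlongrightarrow> 0) at_top)
   \<comment> \<open>(b)\<close>
      \<and> ((\<exists>\<omega>\<ge>0. \<forall>c>0. \<forall>lam\<ge>1.
            Limsup (at_right 0)
              (\<lambda>s. ereal (g (inv_into {0<..} f (c * s powr lam)) / g (inv_into {0<..} f s)))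
            \<le> ereal (lam powr \<omega>))
          \<longrightarrow> ((\<lambda>u. g (beta_t f g Kt t R \<kappa>' u) / g (alpha_t f \<kappa> u)) \<longlongrightarrow> 1) at_top))"
proof -
  interpret L: L42 f g Kt t
    by unfold_locales (use f_pos f_decr f_cont f_bij g_pos g_incr g_cont D_decr D_lim Kt_pos t_pos in auto)
  have P1: "\<forall>\<epsilon>. 0 < \<epsilon> \<and> \<epsilon> < 1 \<longrightarrow> (\<exists>r\<epsilon>>0. \<forall>r>r\<epsilon>.
        (f r)^2 \<le> Gt f g Kt t r \<and> Gt f g Kt t r \<le> f r powr (2 - \<epsilon>))"
  proof (intro allI impI)
    fix \<epsilon> :: real assume e: "0 < \<epsilon> \<and> \<epsilon> < 1"
    obtain N where N: "\<And>r. r \<ge> N \<Longrightarrow> 0 < r \<and> f r < 1 \<and> f r ^ 2 \<le> Gt f g Kt t r \<and> Gt f g Kt t r \<le> f r powr (2 - \<epsilon>)"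
      using L.G_upper[of \<epsilon>] e by (auto simp: eventually_at_top_linorder)
    show "\<exists>r\<epsilon>>0. \<forall>r>r\<epsilon>. (f r)^2 \<le> Gt f g Kt t r \<and> Gt f g Kt t r \<le> f r powr (2 - \<epsilon>)"
      by (rule exI[of _ "max N 1"]) (use N in auto)
  qed
  have P2: "\<exists>R>0. continuous_on {R..} (Gt f g Kt t) \<and>
        (\<forall>r s. R \<le> r \<longrightarrow> r < s \<longrightarrow> Gt f g Kt t s < Gt f g Kt t r)"
    using L.G_decr_ex L.G_cont by blast
  have P3: "\<forall>R>0. continuous_on {R..} (Gt f g Kt t) \<and>
        (\<forall>r s. R \<le> r \<longrightarrow> r < s \<longrightarrow> Gt f g Kt t s < Gt f g Kt t r) \<longrightarrow>
      (\<forall>\<delta>>0.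
        ((\<lambda>u. wt g K t (alpha_t f \<kappa> u) / u powr \<delta>) \<longlongrightarrow> 0) at_top \<and>
        ((\<lambda>u. wt g Kt t (beta_t f g Kt t R \<kappa>' u) / u powr \<delta>) \<longlongrightarrow> 0) at_top)
      \<and> ((\<exists>\<omega>\<ge>0. \<forall>c>0. \<forall>lam\<ge>1.
            Limsup (at_right 0)
              (\<lambda>s. ereal (g (inv_into {0<..} f (c * s powr lam)) / g (inv_into {0<..} f s)))
            \<le> ereal (lam powr \<omega>))
          \<longrightarrow> ((\<lambda>u. g (beta_t f g Kt t R \<kappa>' u) / g (alpha_t f \<kappa> u)) \<longlongrightarrow> 1) at_top)"
  proof (intro allI impI)
    fix R :: real
    assume R: "R > 0" and hR: "continuous_on {R..} (Gt f g Kt t) \<and>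
        (\<forall>r s. R \<le> r \<longrightarrow> r < s \<longrightarrow> Gt f g Kt t s < Gt f g Kt t r)"
    interpret LR: L42R f g Kt t R \<kappa>'
      by unfold_locales (use R hR kappa'_pos in auto)
    show "(\<forall>\<delta>>0.
        ((\<lambda>u. wt g K t (alpha_t f \<kappa> u) / u powr \<delta>) \<longlongrightarrow> 0) at_top \<and>
        ((\<lambda>u. wt g Kt t (beta_t f g Kt t R \<kappa>' u) / u powr \<delta>) \<longlongrightarrow> 0) at_top)
      \<and> ((\<exists>\<omega>\<ge>0. \<forall>c>0. \<forall>lam\<ge>1.
            Limsup (at_right 0)
              (\<lambda>s. ereal (g (inv_into {0<..} f (c * s powr lam)) / g (inv_into {0<..} f s)))
            \<le> ereal (lam powr \<omega>))
          \<longrightarrow> ((\<lambda>u. g (beta_t f g Kt t R \<kappa>' u) / g (alpha_t f \<kappa> u)) \<longlongrightarrow> 1) at_top)"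
    proof (intro conjI allI impI)
      fix \<delta> :: real assume d: "\<delta> > 0"
      show "((\<lambda>u. wt g K t (alpha_t f \<kappa> u) / u powr \<delta>) \<longlongrightarrow> 0) at_top"
        by (rule L.alpha_lim[OF kappa_pos K_pos d])
      show "((\<lambda>u. wt g Kt t (beta_t f g Kt t R \<kappa>' u) / u powr \<delta>) \<longlongrightarrow> 0) at_top"
        by (rule LR.beta_lim[OF d])
    next
      assume "\<exists>\<omega>\<ge>0. \<forall>c>0. \<forall>lam\<ge>1.
            Limsup (at_right 0)
              (\<lambda>s. ereal (g (inv_into {0<..} f (c * s powr lam)) / g (inv_into {0<..} f s)))
            \<le> ereal (lam powr \<omega>)"
      then obtain \<omega> where H: "\<forall>c>0. \<forall>lam\<ge>1.
            Limsup (at_right 0)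
              (\<lambda>s. ereal (g (inv_into {0<..} f (c * s powr lam)) / g (inv_into {0<..} f s)))
            \<le> ereal (lam powr \<omega>)" by blast
      show "((\<lambda>u. g (beta_t f g Kt t R \<kappa>' u) / g (alpha_t f \<kappa> u)) \<longlongrightarrow> 1) at_top"
        by (rule LR.part_b[OF kappa_pos H])
    qed
  qed
  show ?thesis using P1 P2 P3 by blast
qed

end
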